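(* Let $M=\mathbb N\cup\{0\}$ with the metric $|\cdot|$ and base point $0$, and define $f\colon M\to M$ by $f(2n)=0$ and $f(2n+1)=1$ for $n\ge0$. Then $f$ is Lipschitz with $f(0)=0$, $\widehat f\colon\mathcal F(M)\to\mathcal F(M)$ is compact, but $f$ is not flat at infinity: with $x_n=2n+1$, $y_n=2n$ one has $d(x_n,0),d(y_n,0)\to\infty$ while $\frac{d(f(x_n),f(y_n))}{d(x_n,y_n)}=1$ for all $n$.
   Context: Scalars are $\mathbb K=\mathbb R$ or $\mathbb C$. For a pointed metric space $(M,d,0_M)$, $\mathrm{Lip}_0(M)$ denotes the Banach space of Lipschitz functions $g\colon M\to\mathbb K$ with $g(0_M)=0$ normed by the best Lipschitz constant; $\delta(x)\in\mathrm{Lip}_0(M)^*$ is evaluation at $x$; the Lipschitz-free space $\mathcal F(M)$ is the norm-closed linear span of $\{\delta(x):x\in M\}$ in $\mathrm{Lip}_0(M)^*$. For a Lipschitz map $f\colon M\to N$ with $f(0_M)=0_N$, $\widehat f\colon\mathcal F(M)\to\mathcal F(N)$ is the unique bounded linear operator with $\widehat f(\delta(x))=\delta(f(x))$ for all $x\in M$. *)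

theory Defs
  imports "HOL-Analysis.Analysis"
begin

definition dM :: "nat \<Rightarrow> nat \<Rightarrow> real" where
  "dM m n = \<bar>real m - real n\<bar>"

definition lipschitz_M :: "(nat \<Rightarrow> 'k::real_normed_field) \<Rightarrow> bool" where
  "lipschitz_M g \<longleftrightarrow> (\<exists>C. \<forall>x y. norm (g x - g y) \<le> C * dM x y)"

definition lipschitz_MM :: "(nat \<Rightarrow> nat) \<Rightarrow> bool" where
  "lipschitz_MM f \<longleftrightarrow> (\<exists>C. \<forall>x y. dM (f x) (f y) \<le> C * dM x y)"

definition Lip0 :: "(nat \<Rightarrow> 'k::real_normed_field) set" where
  "Lip0 = {g. g 0 = 0 \<and> lipschitz_M g}"

definition lipnorm :: "(nat \<Rightarrow> 'k::real_normed_field) \<Rightarrow> real" where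
  "lipnorm g = Sup {norm (g x - g y) / dM x y | x y. x \<noteq> y}"

text \<open>The dual Lip_0(M)^*: bounded linear functionals on Lip_0(M), represented as functions
  that vanish outside Lip_0(M) (so that each functional has a unique representative).\<close>
definition Lip0_dual :: "((nat \<Rightarrow> 'k::real_normed_field) \<Rightarrow> 'k) set" where
  "Lip0_dual = {\<phi>.
     (\<forall>g\<in>Lip0. \<forall>h\<in>Lip0. \<phi> (\<lambda>x. g x + h x) = \<phi> g + \<phi> h) \<and>
     (\<forall>c. \<forall>g\<in>Lip0. \<phi> (\<lambda>x. c * g x) = c * \<phi> g) \<and>
     (\<exists>C. \<forall>g\<in>Lip0. norm (\<phi> g) \<le> C * lipnorm g) \<and>
     (\<forall>g. g \<notin> Lip0 \<longrightarrow> \<phi> g = 0)}"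

definition dnorm :: "((nat \<Rightarrow> 'k::real_normed_field) \<Rightarrow> 'k) \<Rightarrow> real" where
  "dnorm \<phi> = Sup {norm (\<phi> g) | g. g \<in> Lip0 \<and> lipnorm g \<le> 1}"

definition delta :: "nat \<Rightarrow> (nat \<Rightarrow> 'k::real_normed_field) \<Rightarrow> 'k" where
  "delta x = (\<lambda>g. if g \<in> Lip0 then g x else 0)"

definition delta_span :: "((nat \<Rightarrow> 'k::real_normed_field) \<Rightarrow> 'k) set" where
  "delta_span = {\<phi>. \<exists>S c. finite S \<and> \<phi> = (\<lambda>g. \<Sum>x\<in>S. c x * delta x g)}"

definition FreeM :: "((nat \<Rightarrow> 'k::real_normed_field) \<Rightarrow> 'k) set" where
  "FreeM = {\<phi> \<in> Lip0_dual. \<forall>e>0. \<exists>\<psi>\<in>delta_span. dnorm (\<lambda>g. \<phi> g - \<psi> g) < e}"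

definition is_hat :: "(((nat \<Rightarrow> 'k::real_normed_field) \<Rightarrow> 'k) \<Rightarrow> ((nat \<Rightarrow> 'k) \<Rightarrow> 'k))
                      \<Rightarrow> (nat \<Rightarrow> nat) \<Rightarrow> bool" where
  "is_hat T f \<longleftrightarrow>
     (\<forall>\<mu>\<in>FreeM. T \<mu> \<in> FreeM) \<and>
     (\<forall>\<mu>\<in>FreeM. \<forall>\<nu>\<in>FreeM. T (\<lambda>g. \<mu> g + \<nu> g) = (\<lambda>g. T \<mu> g + T \<nu> g)) \<and>
     (\<forall>c. \<forall>\<mu>\<in>FreeM. T (\<lambda>g. c * \<mu> g) = (\<lambda>g. c * T \<mu> g)) \<and>
     (\<exists>C. \<forall>\<mu>\<in>FreeM. dnorm (T \<mu>) \<le> C * dnorm \<mu>) \<and>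
     (\<forall>x. T (delta x) = delta (f x))"

definition compact_op_FreeM :: "(((nat \<Rightarrow> 'k::real_normed_field) \<Rightarrow> 'k) \<Rightarrow> ((nat \<Rightarrow> 'k) \<Rightarrow> 'k)) \<Rightarrow> bool" where
  "compact_op_FreeM T \<longleftrightarrow>
     (\<forall>s :: nat \<Rightarrow> ((nat \<Rightarrow> 'k) \<Rightarrow> 'k). (\<forall>n. s n \<in> FreeM \<and> dnorm (s n) \<le> 1) \<longrightarrow>
        (\<exists>(r :: nat \<Rightarrow> nat) (\<mu> :: (nat \<Rightarrow> 'k) \<Rightarrow> 'k). strict_mono r \<and> \<mu> \<in> FreeM \<and>
           (\<lambda>n. dnorm (\<lambda>g. T (s (r n)) g - \<mu> g)) \<longlonglongrightarrow> 0))"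

definition hat_compact :: "'k::real_normed_field itself \<Rightarrow> (nat \<Rightarrow> nat) \<Rightarrow> bool" where
  "hat_compact _ f \<longleftrightarrow>
     (\<exists>T :: ((nat \<Rightarrow> 'k) \<Rightarrow> 'k) \<Rightarrow> ((nat \<Rightarrow> 'k) \<Rightarrow> 'k). is_hat T f) \<and>
     (\<forall>T :: ((nat \<Rightarrow> 'k) \<Rightarrow> 'k) \<Rightarrow> ((nat \<Rightarrow> 'k) \<Rightarrow> 'k). is_hat T f \<longrightarrow> compact_op_FreeM T)"

end

theory Submission
  imports Defs "HOL-Real_Asymp.Real_Asymp"
begin


lemma dM_sym: "dM x y = dM y x" unfolding dM_def by simp
lemma dM_ge1: "x \<noteq> y \<Longrightarrow> 1 \<le> dM x y"
  unfolding dM_def by (cases "x < y") auto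
lemma dM_pos: "x \<noteq> y \<Longrightarrow> 0 < dM x y"
  using dM_ge1 by fastforce
lemma dM_nonneg: "0 \<le> dM x y" unfolding dM_def by simp
lemma dM_refl[simp]: "dM x x = 0" unfolding dM_def by simp

definition par :: "nat \<Rightarrow> nat" where "par n = n mod 2"

lemma par_cases: "par n = 0 \<or> par n = 1" unfolding par_def by auto
lemma par0[simp]: "par 0 = 0" unfolding par_def by simp
lemma dM_par: "dM (par x) (par y) \<le> dM x y"
proof (cases "x = y")
  case False
  have "dM (par x) (par y) \<le> 1" using par_cases[of x] par_cases[of y] by (auto simp: dM_def)
  with dM_ge1[OF False] show ?thesis by linarith
qed simp

lemma Lip0_iff: "g \<in> Lip0 \<longleftrightarrow> g 0 = 0 \<and> (\<exists>C. \<forall>x y. norm (g x - g y) \<le> C * dM x y)"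
  unfolding Lip0_def lipschitz_M_def by simp

lemma lip_ratio_bdd:
  fixes g :: "nat \<Rightarrow> 'k::real_normed_field"
  assumes "g \<in> Lip0"
  shows "bdd_above {norm (g x - g y) / dM x y | x y. x \<noteq> y}"
proof -
  obtain C where C: "\<And>x y. norm (g x - g y) \<le> C * dM x y" using assms by (auto simp: Lip0_iff)
  show ?thesis
  proof (rule bdd_aboveI)
    fix r assume "r \<in> {norm (g x - g y) / dM x y | x y. x \<noteq> y}"
    then obtain x y where r: "r = norm (g x - g y) / dM x y" "x \<noteq> y" by auto
    then show "r \<le> C" using C[of x y] dM_pos[OF r(2)] by (simp add: pos_divide_le_eq)
  qed
qed

lemma lipnorm_ratio:
  fixes g :: "nat \<Rightarrow> 'k::real_normed_field"
  assumes "g \<in> Lip0" "x \<noteq> y"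
  shows "norm (g x - g y) / dM x y \<le> lipnorm g"
  unfolding lipnorm_def using assms by (intro cSup_upper lip_ratio_bdd) auto

lemma lipnorm_nonneg:
  fixes g :: "nat \<Rightarrow> 'k::real_normed_field"
  assumes "g \<in> Lip0" shows "0 \<le> lipnorm g"
proof -
  have "0 \<le> norm (g 0 - g 1) / dM 0 1" using dM_pos[of 0 1] by simp
  then show ?thesis using lipnorm_ratio[OF assms, of 0 1] by linarith
qed

lemma lipnorm_le:
  fixes g :: "nat \<Rightarrow> 'k::real_normed_field"
  assumes "g \<in> Lip0" shows "norm (g x - g y) \<le> lipnorm g * dM x y"
proof (cases "x = y")
  case False
  then show ?thesis using lipnorm_ratio[OF assms False] dM_pos[OF False] by (simp add: pos_divide_le_eq)
qed simp

lemma lipnorm_least: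
  fixes g :: "nat \<Rightarrow> 'k::real_normed_field"
  assumes "\<And>x y. x \<noteq> y \<Longrightarrow> norm (g x - g y) \<le> B * dM x y"
  shows "lipnorm g \<le> B"
  unfolding lipnorm_def
proof (rule cSup_least)
  have "norm (g 0 - g 1) / dM 0 1 \<in> {norm (g x - g y) / dM x y | x y. x \<noteq> y}" by (intro CollectI exI[of _ 0] exI[of _ 1]) simp
  then show "{norm (g x - g y) / dM x y | x y. x \<noteq> y} \<noteq> {}" by blast
  fix r assume "r \<in> {norm (g x - g y) / dM x y | x y. x \<noteq> y}"
  then obtain x y where r: "r = norm (g x - g y) / dM x y" "x \<noteq> y" by auto
  then show "r \<le> B" using assms[OF r(2)] dM_pos[OF r(2)] by (simp add: pos_divide_le_eq)
qed

lemma Lip0_zero: "(\<lambda>x. 0) \<in> Lip0" by (auto simp: Lip0_iff intro!: exI[of _ 0])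
lemma lipnorm_zero: "lipnorm (\<lambda>x. 0 :: 'k::real_normed_field) \<le> 1"
  by (rule lipnorm_least) (simp add: dM_nonneg)

lemma Lip0_add:
  fixes g h :: "nat \<Rightarrow> 'k::real_normed_field"
  assumes "g \<in> Lip0" "h \<in> Lip0" shows "(\<lambda>x. g x + h x) \<in> Lip0"
proof -
  have "norm ((g x + h x) - (g y + h y)) \<le> (lipnorm g + lipnorm h) * dM x y" for x y
  proof -
    have "norm ((g x + h x) - (g y + h y)) \<le> norm (g x - g y) + norm (h x - h y)"
      by (metis add_diff_add norm_triangle_ineq)
    then show ?thesis using lipnorm_le[OF assms(1), of x y] lipnorm_le[OF assms(2), of x y]
      by (simp add: distrib_right)
  qed
  then show ?thesis using assms by (auto simp: Lip0_iff)
qed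

lemma Lip0_scale:
  fixes g :: "nat \<Rightarrow> 'k::real_normed_field"
  assumes "g \<in> Lip0" shows "(\<lambda>x. c * g x) \<in> Lip0"
proof -
  have "norm (c * g x - c * g y) \<le> (norm c * lipnorm g) * dM x y" for x y
  proof -
    have "norm (c * g x - c * g y) = norm c * norm (g x - g y)"
      by (metis norm_mult right_diff_distrib)
    then show ?thesis using lipnorm_le[OF assms, of x y]
      by (simp add: mult.assoc mult_left_mono)
  qed
  then show ?thesis using assms by (auto simp: Lip0_iff)
qed

lemma Lip0_par:
  fixes g :: "nat \<Rightarrow> 'k::real_normed_field"
  assumes "g \<in> Lip0" shows "(\<lambda>x. g (par x)) \<in> Lip0" "lipnorm (\<lambda>x. g (par x)) \<le> lipnorm g"
proof -
  have *: "norm (g (par x) - g (par y)) \<le> lipnorm g * dM x y" for x y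
    using lipnorm_le[OF assms, of "par x" "par y"] dM_par[of x y] lipnorm_nonneg[OF assms]
    by (meson mult_left_mono order_trans)
  then show "(\<lambda>x. g (par x)) \<in> Lip0" using assms by (auto simp: Lip0_iff)
  show "lipnorm (\<lambda>x. g (par x)) \<le> lipnorm g" using * by (intro lipnorm_least)
qed

definition hh :: "nat \<Rightarrow> 'k::real_normed_field" where "hh n = (if n = 0 then 0 else 1)"

lemma hh_bound: "norm (hh x - hh y :: 'k::real_normed_field) \<le> 1 * dM x y"
proof (cases "x = y")
  case False
  have "norm (hh x - hh y :: 'k) \<le> 1" by (auto simp: hh_def)
  then show ?thesis using dM_ge1[OF False] by simp
qed simp

lemma hh_Lip0: "(hh :: nat \<Rightarrow> 'k::real_normed_field) \<in> Lip0"
  using hh_bound by (auto simp: Lip0_iff hh_def[of 0] intro!: exI[of _ 1])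
lemma hh_lipnorm: "lipnorm (hh :: nat \<Rightarrow> 'k::real_normed_field) \<le> 1"
  using hh_bound by (intro lipnorm_least) auto



definition bndd :: "((nat \<Rightarrow> 'k::real_normed_field) \<Rightarrow> 'k) \<Rightarrow> bool" where
  "bndd \<phi> \<longleftrightarrow> (\<exists>C. \<forall>g\<in>Lip0. norm (\<phi> g) \<le> C * lipnorm g)"

lemma dual_bndd: "\<phi> \<in> Lip0_dual \<Longrightarrow> bndd \<phi>"
  unfolding Lip0_dual_def bndd_def by blast

lemma dnorm_le:
  fixes \<phi> :: "(nat \<Rightarrow> 'k::real_normed_field) \<Rightarrow> 'k"
  assumes "\<And>g. g \<in> Lip0 \<Longrightarrow> lipnorm g \<le> 1 \<Longrightarrow> norm (\<phi> g) \<le> B"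
  shows "dnorm \<phi> \<le> B"
  unfolding dnorm_def
proof (rule cSup_least)
  have "norm (\<phi> (\<lambda>x. 0)) \<in> {norm (\<phi> g) | g. g \<in> Lip0 \<and> lipnorm g \<le> 1}"
    using Lip0_zero lipnorm_zero by blast
  then show "{norm (\<phi> g) | g. g \<in> Lip0 \<and> lipnorm g \<le> 1} \<noteq> {}" by blast
qed (use assms in auto)

lemma dnorm_upper:
  fixes \<phi> :: "(nat \<Rightarrow> 'k::real_normed_field) \<Rightarrow> 'k"
  assumes "bndd \<phi>" "g \<in> Lip0" "lipnorm g \<le> 1"
  shows "norm (\<phi> g) \<le> dnorm \<phi>"
  unfolding dnorm_def
proof (rule cSup_upper)
  obtain C where C: "\<And>g. g \<in> Lip0 \<Longrightarrow> norm (\<phi> g) \<le> C * lipnorm g" using assms(1) by (auto simp: bndd_def)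
  show "bdd_above {norm (\<phi> g) | g. g \<in> Lip0 \<and> lipnorm g \<le> 1}"
  proof (rule bdd_aboveI)
    fix r assume "r \<in> {norm (\<phi> g) | g. g \<in> Lip0 \<and> lipnorm g \<le> 1}"
    then obtain g where g: "r = norm (\<phi> g)" "g \<in> Lip0" "lipnorm g \<le> 1" by auto
    have "C * lipnorm g \<le> \<bar>C\<bar> * lipnorm g"
      using lipnorm_nonneg[OF g(2)] by (intro mult_right_mono) auto
    also have "\<dots> \<le> \<bar>C\<bar> * 1" using g(3) by (intro mult_left_mono) auto
    finally have "C * lipnorm g \<le> \<bar>C\<bar>" by simp
    then show "r \<le> \<bar>C\<bar>" using C[OF g(2)] g(1) by linarith
  qed
qed (use assms in auto)

lemma dnorm_nonneg:
  fixes \<phi> :: "(nat \<Rightarrow> 'k::real_normed_field) \<Rightarrow> 'k"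
  assumes "bndd \<phi>" shows "0 \<le> dnorm \<phi>"
  using dnorm_upper[OF assms Lip0_zero lipnorm_zero] norm_ge_zero order_trans by blast

lemma dual_bound:
  fixes \<phi> :: "(nat \<Rightarrow> 'k::real_normed_field) \<Rightarrow> 'k"
  assumes "\<phi> \<in> Lip0_dual" "g \<in> Lip0"
  shows "norm (\<phi> g) \<le> dnorm \<phi> * lipnorm g"
proof -
  have sc: "\<And>c. \<phi> (\<lambda>x. c * g x) = c * \<phi> g" using assms unfolding Lip0_dual_def by blast
  define L where "L = lipnorm g"
  have L0: "0 \<le> L" using lipnorm_nonneg[OF assms(2)] L_def by simp
  show ?thesis
  proof (cases "L = 0")
    case True
    have "g x = 0" for x using lipnorm_le[OF assms(2), of x 0] assms(2) True L_def by (simp add: Lip0_iff)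
    then have "(\<lambda>x. 0 * g x) = g" by auto
    then have "\<phi> g = 0" using sc[of 0] by simp
    then show ?thesis using dnorm_nonneg[OF dual_bndd[OF assms(1)]] L0 L_def by simp
  next
    case False
    then have Lp: "0 < L" using L0 by simp
    define g' where "g' = (\<lambda>x. of_real (1/L) * g x)"
    have g'L: "g' \<in> Lip0" unfolding g'_def by (rule Lip0_scale[OF assms(2)])
    have "lipnorm g' \<le> 1"
    proof (rule lipnorm_least)
      fix x y :: nat
      have "g' x - g' y = of_real (1/L) * (g x - g y)" unfolding g'_def by (simp only: right_diff_distrib)
      then have "norm (g' x - g' y) = (1/L) * norm (g x - g y)"
        using Lp by (simp only: norm_mult norm_of_real) simp
      also have "\<dots> \<le> (1/L) * (L * dM x y)" using lipnorm_le[OF assms(2), of x y] Lp L_def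
        by (intro mult_left_mono) auto
      also have "\<dots> = 1 * dM x y" using Lp by simp
      finally show "norm (g' x - g' y) \<le> 1 * dM x y" .
    qed
    then have "norm (\<phi> g') \<le> dnorm \<phi>" using dnorm_upper[OF dual_bndd[OF assms(1)] g'L] by simp
    moreover have "\<phi> g' = of_real (1/L) * \<phi> g" unfolding g'_def by (rule sc)
    then have "norm (\<phi> g') = (1/L) * norm (\<phi> g)" using Lp by (simp only: norm_mult norm_of_real) simp
    ultimately have "(1/L) * norm (\<phi> g) \<le> dnorm \<phi>" by simp
    then show ?thesis using Lp L_def by (simp add: field_simps)
  qed
qed

lemma dual_comb:
  fixes \<phi> \<psi> :: "(nat \<Rightarrow> 'k::real_normed_field) \<Rightarrow> 'k"
  assumes "\<phi> \<in> Lip0_dual" "\<psi> \<in> Lip0_dual"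
  shows "(\<lambda>g. \<phi> g + c * \<psi> g) \<in> Lip0_dual"
proof -
  have a1: "\<forall>g\<in>Lip0. \<forall>h\<in>Lip0. \<phi> (\<lambda>x. g x + h x) = \<phi> g + \<phi> h"
   and s1: "\<forall>d. \<forall>g\<in>Lip0. \<phi> (\<lambda>x. d * g x) = d * \<phi> g"
   and v1: "\<forall>g. g \<notin> Lip0 \<longrightarrow> \<phi> g = 0" using assms(1) unfolding Lip0_dual_def by blast+
  have a2: "\<forall>g\<in>Lip0. \<forall>h\<in>Lip0. \<psi> (\<lambda>x. g x + h x) = \<psi> g + \<psi> h"
   and s2: "\<forall>d. \<forall>g\<in>Lip0. \<psi> (\<lambda>x. d * g x) = d * \<psi> g"
   and v2: "\<forall>g. g \<notin> Lip0 \<longrightarrow> \<psi> g = 0" using assms(2) unfolding Lip0_dual_def by blast+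
  have bd: "norm (\<phi> g + c * \<psi> g) \<le> (dnorm \<phi> + norm c * dnorm \<psi>) * lipnorm g" if "g \<in> Lip0" for g
  proof -
    have "norm (\<phi> g + c * \<psi> g) \<le> norm (\<phi> g) + norm c * norm (\<psi> g)"
      by (metis norm_mult norm_triangle_ineq)
    also have "\<dots> \<le> dnorm \<phi> * lipnorm g + norm c * (dnorm \<psi> * lipnorm g)"
      using dual_bound[OF assms(1) that] dual_bound[OF assms(2) that]
      by (intro add_mono mult_left_mono) auto
    finally show ?thesis by (simp add: algebra_simps)
  qed
  have A: "\<forall>g\<in>Lip0. \<forall>h\<in>Lip0. \<phi> (\<lambda>x. g x + h x) + c * \<psi> (\<lambda>x. g x + h x)
     = (\<phi> g + c * \<psi> g) + (\<phi> h + c * \<psi> h)"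
    using a1 a2 by (simp add: algebra_simps)
  have S: "\<forall>d. \<forall>g\<in>Lip0. \<phi> (\<lambda>x. d * g x) + c * \<psi> (\<lambda>x. d * g x) = d * (\<phi> g + c * \<psi> g)"
    using s1 s2 by (simp add: algebra_simps)
  have V: "\<forall>g. g \<notin> Lip0 \<longrightarrow> \<phi> g + c * \<psi> g = 0" using v1 v2 by simp
  show ?thesis unfolding Lip0_dual_def mem_Collect_eq
    using A S V bd by blast
qed

lemma dual_diff:
  fixes \<phi> \<psi> :: "(nat \<Rightarrow> 'k::real_normed_field) \<Rightarrow> 'k"
  assumes "\<phi> \<in> Lip0_dual" "\<psi> \<in> Lip0_dual"
  shows "(\<lambda>g. \<phi> g - \<psi> g) \<in> Lip0_dual"
  using dual_comb[OF assms, of "-1"] by simp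

lemma dual_zero: "(\<lambda>g. 0) \<in> Lip0_dual"
  unfolding Lip0_dual_def by (auto intro!: exI[of _ 0])

lemma delta_dual: "delta x \<in> (Lip0_dual :: ((nat \<Rightarrow> 'k::real_normed_field) \<Rightarrow> 'k) set)"
proof -
  have "norm (delta x g) \<le> real x * lipnorm g" if "g \<in> Lip0" for g :: "nat \<Rightarrow> 'k"
    using lipnorm_le[OF that, of x 0] that by (simp add: delta_def Lip0_iff dM_def mult.commute)
  then show ?thesis unfolding Lip0_dual_def
    by (auto simp: delta_def Lip0_add Lip0_scale)
qed

lemma dnorm_comb:
  fixes \<phi> \<psi> :: "(nat \<Rightarrow> 'k::real_normed_field) \<Rightarrow> 'k"
  assumes "\<phi> \<in> Lip0_dual" "\<psi> \<in> Lip0_dual"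
  shows "dnorm (\<lambda>g. \<phi> g + c * \<psi> g) \<le> dnorm \<phi> + norm c * dnorm \<psi>"
proof (rule dnorm_le)
  fix g :: "nat \<Rightarrow> 'k" assume g: "g \<in> Lip0" "lipnorm g \<le> 1"
  have "norm (\<phi> g + c * \<psi> g) \<le> norm (\<phi> g) + norm c * norm (\<psi> g)"
    by (metis norm_mult norm_triangle_ineq)
  also have "\<dots> \<le> dnorm \<phi> + norm c * dnorm \<psi>"
    using dnorm_upper[OF dual_bndd[OF assms(1)] g] dnorm_upper[OF dual_bndd[OF assms(2)] g]
    by (intro add_mono mult_left_mono) auto
  finally show "norm (\<phi> g + c * \<psi> g) \<le> dnorm \<phi> + norm c * dnorm \<psi>" .
qed



lemma span_dual:
  assumes "\<psi> \<in> delta_span"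
  shows "\<psi> \<in> (Lip0_dual :: ((nat \<Rightarrow> 'k::real_normed_field) \<Rightarrow> 'k) set)"
proof -
  obtain S c where S: "finite S" "\<psi> = (\<lambda>g. \<Sum>x\<in>S. c x * delta x g)"
    using assms unfolding delta_span_def by blast
  have "(\<lambda>g. \<Sum>x\<in>S. c x * delta x g) \<in> (Lip0_dual :: ((nat \<Rightarrow> 'k) \<Rightarrow> 'k) set)"
    using S(1)
  proof (induction S rule: finite_induct)
    case empty then show ?case using dual_zero by simp
  next
    case (insert x S)
    have "(\<lambda>g. (\<Sum>x\<in>S. c x * delta x g) + c x * delta x g) \<in> (Lip0_dual :: ((nat \<Rightarrow> 'k) \<Rightarrow> 'k) set)"
      by (rule dual_comb[OF insert.IH delta_dual])
    then show ?case using insert.hyps by (simp add: add.commute)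
  qed
  then show ?thesis using S by simp
qed

lemma span_comb:
  fixes \<psi>1 \<psi>2 :: "(nat \<Rightarrow> 'k::real_normed_field) \<Rightarrow> 'k"
  assumes "\<psi>1 \<in> delta_span" "\<psi>2 \<in> delta_span"
  shows "(\<lambda>g. \<psi>1 g + c * \<psi>2 g) \<in> delta_span"
proof -
  obtain S1 c1 where S1: "finite S1" "\<psi>1 = (\<lambda>g. \<Sum>x\<in>S1. c1 x * delta x g)"
    using assms(1) unfolding delta_span_def by blast
  obtain S2 c2 where S2: "finite S2" "\<psi>2 = (\<lambda>g. \<Sum>x\<in>S2. c2 x * delta x g)"
    using assms(2) unfolding delta_span_def by blast
  define A where "A x = (if x \<in> S1 then c1 x else 0)" for x
  define B where "B x = (if x \<in> S2 then c2 x else 0)" for x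
  define d where "d x = A x + c * B x" for x
  have e1: "(\<Sum>x\<in>S1\<union>S2. (if x \<in> S1 then c1 x else 0) * delta x g) = (\<Sum>x\<in>S1. c1 x * delta x g)" for g
    by (rule sum.mono_neutral_cong_right) (use S1 S2 in auto)
  have e2: "(\<Sum>x\<in>S1\<union>S2. (if x \<in> S2 then c2 x else 0) * delta x g) = (\<Sum>x\<in>S2. c2 x * delta x g)" for g
    by (rule sum.mono_neutral_cong_right) (use S1 S2 in auto)
  have "(\<lambda>g. \<psi>1 g + c * \<psi>2 g) = (\<lambda>g. \<Sum>x\<in>S1\<union>S2. d x * delta x g)"
  proof
    fix g
    have "(\<Sum>x\<in>S1\<union>S2. d x * delta x g) = (\<Sum>x\<in>S1\<union>S2. (if x \<in> S1 then c1 x else 0) * delta x g)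
       + c * (\<Sum>x\<in>S1\<union>S2. (if x \<in> S2 then c2 x else 0) * delta x g)"
    proof -
      have "(\<Sum>x\<in>S1\<union>S2. d x * delta x g) = (\<Sum>x\<in>S1\<union>S2. A x * delta x g + c * (B x * delta x g))"
        by (rule sum.cong) (simp_all add: d_def algebra_simps)
      also have "\<dots> = (\<Sum>x\<in>S1\<union>S2. A x * delta x g) + c * (\<Sum>x\<in>S1\<union>S2. B x * delta x g)"
        by (simp only: sum.distrib sum_distrib_left)
      finally show ?thesis unfolding A_def B_def .
    qed
    then show "\<psi>1 g + c * \<psi>2 g = (\<Sum>x\<in>S1\<union>S2. d x * delta x g)" using e1 e2 S1 S2 by simp
  qed
  then show ?thesis unfolding delta_span_def using S1 S2 by blast
qed

lemma span_delta: "(\<lambda>g. c * delta x g) \<in> delta_span"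
  unfolding delta_span_def by (intro CollectI exI[of _ "{x}"] exI[of _ "\<lambda>_. c"]) auto

lemma dnorm_zero: "dnorm (\<lambda>g. 0 :: 'k::real_normed_field) \<le> 0"
  by (rule dnorm_le) simp

lemma span_free:
  assumes "\<psi> \<in> delta_span"
  shows "\<psi> \<in> (FreeM :: ((nat \<Rightarrow> 'k::real_normed_field) \<Rightarrow> 'k) set)"
  unfolding FreeM_def mem_Collect_eq
proof (intro conjI allI impI)
  show "\<psi> \<in> Lip0_dual" by (rule span_dual[OF assms])
  fix e :: real assume "e > 0"
  moreover have "dnorm (\<lambda>g. \<psi> g - \<psi> g) \<le> 0" using dnorm_zero by simp
  ultimately show "\<exists>\<psi>'\<in>delta_span. dnorm (\<lambda>g. \<psi> g - \<psi>' g) < e" using assms by force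
qed

lemma free_dual: "\<mu> \<in> FreeM \<Longrightarrow> \<mu> \<in> Lip0_dual" unfolding FreeM_def by blast

lemma free_comb:
  fixes \<mu> \<nu> :: "(nat \<Rightarrow> 'k::real_normed_field) \<Rightarrow> 'k"
  assumes "\<mu> \<in> FreeM" "\<nu> \<in> FreeM"
  shows "(\<lambda>g. \<mu> g + c * \<nu> g) \<in> FreeM"
  unfolding FreeM_def mem_Collect_eq
proof (intro conjI allI impI)
  show "(\<lambda>g. \<mu> g + c * \<nu> g) \<in> Lip0_dual" by (rule dual_comb[OF free_dual[OF assms(1)] free_dual[OF assms(2)]])
  fix e :: real assume e: "e > 0"
  have e1: "e/2 > 0" using e by simp
  obtain \<psi>1 where p1: "\<psi>1 \<in> delta_span" "dnorm (\<lambda>g. \<mu> g - \<psi>1 g) < e/2"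
    using assms(1) e1 unfolding FreeM_def by blast
  have e2: "e / (2 * (1 + norm c)) > 0" using e by (simp add: add_pos_nonneg)
  obtain \<psi>2 where p2: "\<psi>2 \<in> delta_span" "dnorm (\<lambda>g. \<nu> g - \<psi>2 g) < e / (2 * (1 + norm c))"
    using assms(2) e2 unfolding FreeM_def by blast
  have d1: "(\<lambda>g. \<mu> g - \<psi>1 g) \<in> Lip0_dual" by (rule dual_diff[OF free_dual[OF assms(1)] span_dual[OF p1(1)]])
  have d2: "(\<lambda>g. \<nu> g - \<psi>2 g) \<in> Lip0_dual" by (rule dual_diff[OF free_dual[OF assms(2)] span_dual[OF p2(1)]])
  have eq: "(\<lambda>g. \<mu> g + c * \<nu> g - (\<psi>1 g + c * \<psi>2 g)) = (\<lambda>g. (\<mu> g - \<psi>1 g) + c * (\<nu> g - \<psi>2 g))"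
    by (simp add: algebra_simps)
  have "dnorm (\<lambda>g. (\<mu> g - \<psi>1 g) + c * (\<nu> g - \<psi>2 g)) \<le> dnorm (\<lambda>g. \<mu> g - \<psi>1 g) + norm c * dnorm (\<lambda>g. \<nu> g - \<psi>2 g)"
    using dnorm_comb[OF d1 d2] by simp
  also have "norm c * dnorm (\<lambda>g. \<nu> g - \<psi>2 g) \<le> norm c * (e / (2 * (1 + norm c)))"
    using p2(2) by (intro mult_left_mono) auto
  also have "norm c * (e / (2 * (1 + norm c))) \<le> e / 2"
  proof -
    have "norm c * (e / (2 * (1 + norm c))) = (e/2) * (norm c / (1 + norm c))" by (simp add: field_simps)
    also have "\<dots> \<le> (e/2) * 1"
    proof (intro mult_left_mono)
      have "norm c \<le> 1 + norm c" by simp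
      then show "norm c / (1 + norm c) \<le> 1" by (simp add: divide_le_eq_1 add_pos_nonneg)
    qed (use e in simp)
    finally show ?thesis by simp
  qed
  finally have "dnorm (\<lambda>g. (\<mu> g - \<psi>1 g) + c * (\<nu> g - \<psi>2 g)) < e" using p1(2) by linarith
  then show "\<exists>\<psi>\<in>delta_span. dnorm (\<lambda>g. \<mu> g + c * \<nu> g - \<psi> g) < e"
    using span_comb[OF p1(1) p2(1), of c] eq by (intro bexI[of _ "\<lambda>g. \<psi>1 g + c * \<psi>2 g"]) auto
qed



lemma delta0: "delta 0 g = 0" by (simp add: delta_def Lip0_def)

lemma sum_delta_par:
  "(\<Sum>x\<in>S. c x * delta (par x) g) = (\<Sum>x\<in>S. if par x = 1 then c x else 0) * delta 1 g"
proof -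
  have "c x * delta (par x) g = (if par x = 1 then c x else 0) * delta 1 g" for x
    using par_cases[of x] by (auto simp: delta0)
  then show ?thesis by (simp add: sum_distrib_right)
qed

definition T0 :: "((nat \<Rightarrow> 'k::real_normed_field) \<Rightarrow> 'k) \<Rightarrow> ((nat \<Rightarrow> 'k) \<Rightarrow> 'k)" where
  "T0 \<mu> = (\<lambda>g. if g \<in> Lip0 then \<mu> (\<lambda>x. g (par x)) else 0)"

lemma T0_dual:
  fixes \<mu> :: "(nat \<Rightarrow> 'k::real_normed_field) \<Rightarrow> 'k"
  assumes "\<mu> \<in> Lip0_dual"
  shows "T0 \<mu> \<in> Lip0_dual" "dnorm (T0 \<mu>) \<le> dnorm \<mu>"
proof -
  have a1: "\<forall>g\<in>Lip0. \<forall>h\<in>Lip0. \<mu> (\<lambda>x. g x + h x) = \<mu> g + \<mu> h"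
   and s1: "\<forall>d. \<forall>g\<in>Lip0. \<mu> (\<lambda>x. d * g x) = d * \<mu> g" using assms unfolding Lip0_dual_def by blast+
  have bd: "norm (T0 \<mu> g) \<le> dnorm \<mu> * lipnorm g" if "g \<in> Lip0" for g
  proof -
    have "norm (T0 \<mu> g) = norm (\<mu> (\<lambda>x. g (par x)))" using that by (simp add: T0_def)
    also have "\<dots> \<le> dnorm \<mu> * lipnorm (\<lambda>x. g (par x))" by (rule dual_bound[OF assms Lip0_par(1)[OF that]])
    also have "\<dots> \<le> dnorm \<mu> * lipnorm g"
      by (intro mult_left_mono Lip0_par(2)[OF that] dnorm_nonneg dual_bndd assms)
    finally show ?thesis .
  qed
  have A: "\<forall>g\<in>Lip0. \<forall>h\<in>Lip0. T0 \<mu> (\<lambda>x. g x + h x) = T0 \<mu> g + T0 \<mu> h"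
  proof (intro ballI)
    fix g h :: "nat \<Rightarrow> 'k" assume gh: "g \<in> Lip0" "h \<in> Lip0"
    then show "T0 \<mu> (\<lambda>x. g x + h x) = T0 \<mu> g + T0 \<mu> h"
      using a1 Lip0_par(1)[OF gh(1)] Lip0_par(1)[OF gh(2)] Lip0_add[OF gh] by (simp add: T0_def)
  qed
  have S: "\<forall>d. \<forall>g\<in>Lip0. T0 \<mu> (\<lambda>x. d * g x) = d * T0 \<mu> g"
  proof (intro allI ballI)
    fix d and g :: "nat \<Rightarrow> 'k" assume g: "g \<in> Lip0"
    then show "T0 \<mu> (\<lambda>x. d * g x) = d * T0 \<mu> g"
      using s1 Lip0_par(1)[OF g] Lip0_scale[OF g, of d] by (simp add: T0_def)
  qed
  have V: "\<forall>g. g \<notin> Lip0 \<longrightarrow> T0 \<mu> g = 0" by (simp add: T0_def)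
  show "T0 \<mu> \<in> Lip0_dual" unfolding Lip0_dual_def mem_Collect_eq using A S V bd by blast
  show "dnorm (T0 \<mu>) \<le> dnorm \<mu>"
  proof (rule dnorm_le)
    fix g :: "nat \<Rightarrow> 'k" assume g: "g \<in> Lip0" "lipnorm g \<le> 1"
    have "dnorm \<mu> * lipnorm g \<le> dnorm \<mu> * 1"
      by (intro mult_left_mono g(2) dnorm_nonneg dual_bndd assms)
    then show "norm (T0 \<mu> g) \<le> dnorm \<mu>" using bd[OF g(1)] by simp
  qed
qed

lemma T0_span:
  fixes \<psi> :: "(nat \<Rightarrow> 'k::real_normed_field) \<Rightarrow> 'k"
  assumes "\<psi> \<in> delta_span"
  shows "T0 \<psi> \<in> delta_span"
proof -
  obtain S c where S: "finite S" "\<psi> = (\<lambda>g. \<Sum>x\<in>S. c x * delta x g)"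
    using assms unfolding delta_span_def by blast
  have "T0 \<psi> = (\<lambda>g. \<Sum>x\<in>S. c x * delta (par x) g)"
  proof
    fix g :: "nat \<Rightarrow> 'k"
    show "T0 \<psi> g = (\<Sum>x\<in>S. c x * delta (par x) g)"
    proof (cases "g \<in> Lip0")
      case True
      then show ?thesis using S Lip0_par(1)[OF True] by (simp add: T0_def delta_def)
    qed (simp add: T0_def delta_def)
  qed
  also have "\<dots> = (\<lambda>g. (\<Sum>x\<in>S. if par x = 1 then c x else 0) * delta 1 g)"
    by (simp add: sum_delta_par)
  finally show ?thesis using span_delta by simp
qed

lemma T0_free:
  fixes \<mu> :: "(nat \<Rightarrow> 'k::real_normed_field) \<Rightarrow> 'k"
  assumes "\<mu> \<in> FreeM"
  shows "T0 \<mu> \<in> FreeM"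
  unfolding FreeM_def mem_Collect_eq
proof (intro conjI allI impI)
  show "T0 \<mu> \<in> Lip0_dual" by (rule T0_dual(1)[OF free_dual[OF assms]])
  fix e :: real assume e: "e > 0"
  obtain \<psi> where p: "\<psi> \<in> delta_span" "dnorm (\<lambda>g. \<mu> g - \<psi> g) < e"
    using assms e unfolding FreeM_def by blast
  have eq: "(\<lambda>g. T0 \<mu> g - T0 \<psi> g) = T0 (\<lambda>g. \<mu> g - \<psi> g)"
    by (auto simp: T0_def)
  have "dnorm (T0 (\<lambda>g. \<mu> g - \<psi> g)) \<le> dnorm (\<lambda>g. \<mu> g - \<psi> g)"
    by (rule T0_dual(2)[OF dual_diff[OF free_dual[OF assms] span_dual[OF p(1)]]])
  then have "dnorm (\<lambda>g. T0 \<mu> g - T0 \<psi> g) < e" using p(2) eq by simp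
  then show "\<exists>\<psi>\<in>delta_span. dnorm (\<lambda>g. T0 \<mu> g - \<psi> g) < e" using T0_span[OF p(1)] by blast
qed

lemma T0_hat: "is_hat (T0 :: ((nat \<Rightarrow> 'k::real_normed_field) \<Rightarrow> 'k) \<Rightarrow> _) par"
  unfolding is_hat_def
proof (intro conjI ballI allI exI[of _ 1])
  fix \<mu> :: "(nat \<Rightarrow> 'k) \<Rightarrow> 'k" assume m: "\<mu> \<in> FreeM"
  show "T0 \<mu> \<in> FreeM" by (rule T0_free[OF m])
  show "dnorm (T0 \<mu>) \<le> 1 * dnorm \<mu>" using T0_dual(2)[OF free_dual[OF m]] by simp
  fix c show "T0 (\<lambda>g. c * \<mu> g) = (\<lambda>g. c * T0 \<mu> g)" by (auto simp: T0_def)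
next
  fix \<mu> \<nu> :: "(nat \<Rightarrow> 'k) \<Rightarrow> 'k"
  show "T0 (\<lambda>g. \<mu> g + \<nu> g) = (\<lambda>g. T0 \<mu> g + T0 \<nu> g)" by (auto simp: T0_def)
next
  fix x
  show "T0 (delta x) = (delta (par x) :: (nat \<Rightarrow> 'k) \<Rightarrow> 'k)"
  proof
    fix g :: "nat \<Rightarrow> 'k"
    show "T0 (delta x) g = delta (par x) g"
      by (cases "g \<in> Lip0") (auto simp: T0_def delta_def Lip0_par(1))
  qed
qed



lemma T_span:
  fixes T :: "((nat \<Rightarrow> 'k::real_normed_field) \<Rightarrow> 'k) \<Rightarrow> ((nat \<Rightarrow> 'k) \<Rightarrow> 'k)"
  assumes hT: "is_hat T par" and S: "finite S"
  shows "T (\<lambda>g. \<Sum>x\<in>S. c x * delta x g) = (\<lambda>g. \<Sum>x\<in>S. c x * delta (par x) g)"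
  using S
proof (induction S rule: finite_induct)
  have sc: "\<forall>c. \<forall>\<mu>\<in>FreeM. T (\<lambda>g. c * \<mu> g) = (\<lambda>g. c * T \<mu> g)"
   and dl: "\<forall>x. T (delta x) = delta (par x)" using hT unfolding is_hat_def by blast+
  case empty
  have d0: "delta 0 \<in> (FreeM :: ((nat \<Rightarrow> 'k) \<Rightarrow> 'k) set)" using span_free[OF span_delta[of 1 0]] by simp
  have "T (\<lambda>g. 0 * delta 0 g) = (\<lambda>g. 0 * T (delta 0) g)" using sc d0 by blast
  then show ?case by simp
next
  case (insert x S)
  have sc: "\<forall>c. \<forall>\<mu>\<in>FreeM. T (\<lambda>g. c * \<mu> g) = (\<lambda>g. c * T \<mu> g)"
   and dl: "\<forall>x. T (delta x) = delta (par x)"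
   and ad: "\<forall>\<mu>\<in>FreeM. \<forall>\<nu>\<in>FreeM. T (\<lambda>g. \<mu> g + \<nu> g) = (\<lambda>g. T \<mu> g + T \<nu> g)"
    using hT unfolding is_hat_def by blast+
  have dx: "delta x \<in> (FreeM :: ((nat \<Rightarrow> 'k) \<Rightarrow> 'k) set)" using span_free[OF span_delta[of 1 x]] by simp
  have m1: "(\<lambda>g. \<Sum>x\<in>S. c x * delta x g) \<in> (FreeM :: ((nat \<Rightarrow> 'k) \<Rightarrow> 'k) set)"
    by (rule span_free) (use insert.hyps in \<open>auto simp: delta_span_def\<close>)
  have m2: "(\<lambda>g. c x * delta x g) \<in> (FreeM :: ((nat \<Rightarrow> 'k) \<Rightarrow> 'k) set)" by (rule span_free[OF span_delta])
  have e: "(\<lambda>g. \<Sum>y\<in>insert x S. c y * delta y g) = (\<lambda>g. (\<Sum>y\<in>S. c y * delta y g) + c x * delta x g)"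
    using insert.hyps by (simp add: add.commute)
  have "T (\<lambda>g. (\<Sum>y\<in>S. c y * delta y g) + c x * delta x g)
      = (\<lambda>g. T (\<lambda>g. \<Sum>y\<in>S. c y * delta y g) g + T (\<lambda>g. c x * delta x g) g)"
    by (rule ad[rule_format, OF m1 m2])
  also have "T (\<lambda>g. c x * delta x g) = (\<lambda>g. c x * delta (par x) g)" using sc dx dl by simp
  finally show ?case using e insert.IH insert.hyps by (simp add: add.commute)
qed

lemma small_zero:
  fixes z :: "'a::real_normed_vector"
  assumes "\<And>e. e > 0 \<Longrightarrow> norm z \<le> e * K" "K \<ge> 0"
  shows "z = 0"
proof (rule ccontr)
  assume "z \<noteq> 0"
  then have n: "norm z > 0" by simp
  have "norm z \<le> (norm z / (K + 1)) * K" using assms(1)[of "norm z / (K+1)"] n assms(2) by simp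
  also have "\<dots> < norm z" using n assms(2) by (simp add: field_simps)
  finally show False by simp
qed

lemma claimA:
  fixes T :: "((nat \<Rightarrow> 'k::real_normed_field) \<Rightarrow> 'k) \<Rightarrow> ((nat \<Rightarrow> 'k) \<Rightarrow> 'k)"
  assumes hT: "is_hat T par" and m: "\<mu> \<in> FreeM" and g: "g \<in> Lip0"
  shows "T \<mu> g = T \<mu> hh * g 1"
proof -
  have sc: "\<forall>c. \<forall>\<mu>\<in>FreeM. T (\<lambda>g. c * \<mu> g) = (\<lambda>g. c * T \<mu> g)"
   and ad: "\<forall>\<mu>\<in>FreeM. \<forall>\<nu>\<in>FreeM. T (\<lambda>g. \<mu> g + \<nu> g) = (\<lambda>g. T \<mu> g + T \<nu> g)"
   and fr: "\<forall>\<mu>\<in>FreeM. T \<mu> \<in> FreeM"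
    using hT unfolding is_hat_def by blast+
  obtain C where C: "\<forall>\<mu>\<in>FreeM. dnorm (T \<mu>) \<le> C * dnorm \<mu>" using hT unfolding is_hat_def by blast
  define K where "K = \<bar>C\<bar> * (lipnorm g + norm (g 1))"
  have K0: "K \<ge> 0" unfolding K_def using lipnorm_nonneg[OF g] by simp
  show ?thesis
  proof (rule eq_iff_diff_eq_0[THEN iffD2], rule small_zero[OF _ K0])
    fix e :: real assume e: "e > 0"
    obtain \<psi> where p: "\<psi> \<in> delta_span" "dnorm (\<lambda>g. \<mu> g - \<psi> g) < e"
      using m e unfolding FreeM_def by blast
    obtain S c where S: "finite S" "\<psi> = (\<lambda>g. \<Sum>x\<in>S. c x * delta x g)"
      using p(1) unfolding delta_span_def by blast
    define k where "k = (\<Sum>x\<in>S. if par x = 1 then c x else 0)"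
    have Tpsi: "T \<psi> = (\<lambda>g. k * delta 1 g)"
      using T_span[OF hT S(1), of c] S(2) by (simp add: sum_delta_par k_def)
    have pf: "\<psi> \<in> FreeM" by (rule span_free[OF p(1)])
    have npf: "(\<lambda>g. (-1) * \<psi> g) \<in> FreeM" using free_comb[OF pf pf, of "-2"] by (simp add: algebra_simps)
    define \<phi> where "\<phi> = (\<lambda>g. \<mu> g + (-1) * \<psi> g)"
    have phf: "\<phi> \<in> FreeM" unfolding \<phi>_def by (rule free_comb[OF m pf])
    have Tphi: "T \<phi> = (\<lambda>g. T \<mu> g + (-1) * T \<psi> g)"
    proof -
      have "T \<phi> = (\<lambda>g. T \<mu> g + T (\<lambda>g. (-1) * \<psi> g) g)" unfolding \<phi>_def by (rule ad[rule_format, OF m npf])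
      also have "T (\<lambda>g. (-1) * \<psi> g) = (\<lambda>g. (-1) * T \<psi> g)" using sc pf by blast
      finally show ?thesis .
    qed
    have D: "dnorm (T \<phi>) \<le> \<bar>C\<bar> * e"
    proof -
      have "dnorm (T \<phi>) \<le> C * dnorm \<phi>" using C phf by blast
      also have "dnorm \<phi> = dnorm (\<lambda>g. \<mu> g - \<psi> g)" unfolding \<phi>_def by simp
      also have "C * dnorm (\<lambda>g. \<mu> g - \<psi> g) \<le> \<bar>C\<bar> * dnorm (\<lambda>g. \<mu> g - \<psi> g)"
        using dnorm_nonneg[OF dual_bndd[OF free_dual[OF phf]]] \<phi>_def by (intro mult_right_mono) auto
      also have "\<dots> \<le> \<bar>C\<bar> * e" using p(2) by (intro mult_left_mono) auto
      finally show ?thesis .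
    qed
    have Tphd: "T \<phi> \<in> Lip0_dual" using fr phf free_dual by blast
    have g1: "T \<mu> g = T \<phi> g + k * g 1" using Tphi Tpsi g by (simp add: delta_def)
    have h1: "T \<mu> hh = T \<phi> hh + k" using Tphi Tpsi hh_Lip0 by (auto simp: delta_def hh_def)
    have "T \<mu> g - T \<mu> hh * g 1 = T \<phi> g - T \<phi> hh * g 1" using g1 h1 by (simp add: algebra_simps)
    then have "norm (T \<mu> g - T \<mu> hh * g 1) \<le> norm (T \<phi> g) + norm (T \<phi> hh) * norm (g 1)"
      by (metis norm_mult norm_triangle_ineq4)
    also have "\<dots> \<le> dnorm (T \<phi>) * lipnorm g + (dnorm (T \<phi>) * 1) * norm (g 1)"
    proof (intro add_mono mult_right_mono)
      show "norm (T \<phi> g) \<le> dnorm (T \<phi>) * lipnorm g" by (rule dual_bound[OF Tphd g])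
      have "norm (T \<phi> hh) \<le> dnorm (T \<phi>) * lipnorm (hh :: nat \<Rightarrow> 'k)" using dual_bound[OF Tphd hh_Lip0] by simp
      also have "\<dots> \<le> dnorm (T \<phi>) * 1"
        by (intro mult_left_mono hh_lipnorm dnorm_nonneg dual_bndd Tphd)
      finally show "norm (T \<phi> hh) \<le> dnorm (T \<phi>) * 1" .
    qed simp
    also have "\<dots> = dnorm (T \<phi>) * (lipnorm g + norm (g 1))" by (simp add: algebra_simps)
    also have "\<dots> \<le> (\<bar>C\<bar> * e) * (lipnorm g + norm (g 1))"
      using D lipnorm_nonneg[OF g] by (intro mult_right_mono) auto
    also have "\<dots> = e * K" unfolding K_def by simp
    finally show "norm (T \<mu> g - T \<mu> hh * g 1) \<le> e * K" .
  qed
qed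



lemma compact_T:
  fixes T :: "((nat \<Rightarrow> 'k::{real_normed_field,heine_borel}) \<Rightarrow> 'k) \<Rightarrow> ((nat \<Rightarrow> 'k) \<Rightarrow> 'k)"
  assumes hT: "is_hat T par"
  shows "compact_op_FreeM T"
  unfolding compact_op_FreeM_def
proof (intro allI impI)
  fix s :: "nat \<Rightarrow> ((nat \<Rightarrow> 'k) \<Rightarrow> 'k)"
  assume s: "\<forall>n. s n \<in> FreeM \<and> dnorm (s n) \<le> 1"
  have fr: "\<forall>\<mu>\<in>FreeM. T \<mu> \<in> FreeM" using hT unfolding is_hat_def by blast
  obtain C where C: "\<forall>\<mu>\<in>FreeM. dnorm (T \<mu>) \<le> C * dnorm \<mu>" using hT unfolding is_hat_def by blast
  define a where "a n = T (s n) hh" for n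
  have abd: "norm (a n) \<le> \<bar>C\<bar>" for n
  proof -
    have sn: "s n \<in> FreeM" "dnorm (s n) \<le> 1" using s by auto
    have Td: "T (s n) \<in> Lip0_dual" using fr sn(1) free_dual by blast
    have "norm (a n) \<le> dnorm (T (s n)) * lipnorm (hh :: nat \<Rightarrow> 'k)"
      unfolding a_def by (rule dual_bound[OF Td hh_Lip0])
    also have "\<dots> \<le> dnorm (T (s n)) * 1"
      by (intro mult_left_mono hh_lipnorm dnorm_nonneg dual_bndd Td)
    also have "\<dots> \<le> C * dnorm (s n)" using C sn(1) by simp
    also have "\<dots> \<le> \<bar>C\<bar> * dnorm (s n)"
      using dnorm_nonneg[OF dual_bndd[OF free_dual[OF sn(1)]]] by (intro mult_right_mono) auto
    also have "\<dots> \<le> \<bar>C\<bar> * 1" using sn(2) by (intro mult_left_mono) auto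
    finally show ?thesis by simp
  qed
  have "bounded (range a)" unfolding bounded_iff using abd by blast
  then obtain l r where lr: "strict_mono r" "(a \<circ> r) \<longlonglongrightarrow> l"
    using bounded_imp_convergent_subsequence by blast
  define \<mu> where "\<mu> = (\<lambda>g. l * delta 1 g)"
  have msp: "\<mu> \<in> delta_span" unfolding \<mu>_def by (rule span_delta)
  have dle: "dnorm (\<lambda>g. T (s (r n)) g - \<mu> g) \<le> norm (a (r n) - l)" for n
  proof (rule dnorm_le)
    fix g :: "nat \<Rightarrow> 'k" assume g: "g \<in> Lip0" "lipnorm g \<le> 1"
    have "T (s (r n)) g = a (r n) * g 1" unfolding a_def
      by (rule claimA[OF hT _ g(1)]) (use s in blast)
    then have "T (s (r n)) g - \<mu> g = (a (r n) - l) * g 1" using g(1)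
      by (simp add: \<mu>_def delta_def algebra_simps)
    then have "norm (T (s (r n)) g - \<mu> g) = norm (a (r n) - l) * norm (g 1)" by (simp add: norm_mult)
    also have "norm (g 1) \<le> 1"
    proof -
      have "norm (g 1 - g 0) \<le> lipnorm g * dM 1 0" by (rule lipnorm_le[OF g(1)])
      then show ?thesis using g by (simp add: Lip0_def dM_def)
    qed
    then have "norm (a (r n) - l) * norm (g 1) \<le> norm (a (r n) - l) * 1" by (intro mult_left_mono) auto
    finally show "norm (T (s (r n)) g - \<mu> g) \<le> norm (a (r n) - l)" by simp
  qed
  have dge: "0 \<le> dnorm (\<lambda>g. T (s (r n)) g - \<mu> g)" for n
  proof -
    have "T (s (r n)) \<in> Lip0_dual" using fr s free_dual by blast
    then show ?thesis by (rule dnorm_nonneg[OF dual_bndd[OF dual_diff[OF _ span_dual[OF msp]]]])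
  qed
  have "(\<lambda>n. norm (a (r n) - l)) \<longlonglongrightarrow> 0"
    using lr(2) by (simp add: o_def tendsto_norm_zero_iff LIM_zero_iff)
  then have "(\<lambda>n. dnorm (\<lambda>g. T (s (r n)) g - \<mu> g)) \<longlonglongrightarrow> 0"
    by (rule Lim_null_comparison[rotated]) (use dle dge in simp)
  then show "\<exists>r \<mu>. strict_mono r \<and> \<mu> \<in> FreeM \<and> (\<lambda>n. dnorm (\<lambda>g. T (s (r n)) g - \<mu> g)) \<longlonglongrightarrow> 0"
    using lr(1) span_free[OF msp] by blast
qed

lemma hat_compact_par: "hat_compact TYPE('k::{real_normed_field,heine_borel}) par"
  unfolding hat_compact_def using T0_hat compact_T by blast

theorem mainTheorem12:
  fixes f :: "nat \<Rightarrow> nat" and x y :: "nat \<Rightarrow> nat"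
  assumes f_def: "\<And>n. f (2 * n) = 0" "\<And>n. f (2 * n + 1) = 1"
    and xy_def: "\<And>n. x n = 2 * n + 1" "\<And>n. y n = 2 * n"
  shows "lipschitz_MM f \<and> f 0 = 0
    \<and> hat_compact TYPE(real) f \<and> hat_compact TYPE(complex) f
    \<and> filterlim (\<lambda>n. dM (x n) 0) at_top sequentially
    \<and> filterlim (\<lambda>n. dM (y n) 0) at_top sequentially
    \<and> (\<forall>n. dM (f (x n)) (f (y n)) / dM (x n) (y n) = 1)"
proof -
  have fp: "f = par"
  proof
    fix n :: nat
    have "n = 2 * (n div 2) + n mod 2" by simp
    then show "f n = par n" unfolding par_def
      by (cases "n mod 2 = 0") (metis f_def(1) add_0_right, metis f_def(2) mod2_gr_0 not_gr0)
  qed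
  have l: "lipschitz_MM f" unfolding lipschitz_MM_def fp using dM_par by (intro exI[of _ 1]) simp
  have dx: "dM (x n) 0 = 2 * real n + 1" for n by (simp add: dM_def xy_def)
  have dy: "dM (y n) 0 = 2 * real n" for n by (simp add: dM_def xy_def)
  have fx: "filterlim (\<lambda>n. dM (x n) 0) at_top sequentially" unfolding dx by real_asymp
  have fy: "filterlim (\<lambda>n. dM (y n) 0) at_top sequentially" unfolding dy by real_asymp
  have r: "dM (f (x n)) (f (y n)) / dM (x n) (y n) = 1" for n
    using f_def by (simp add: xy_def dM_def)
  have h1: "hat_compact TYPE(real) f" using hat_compact_par fp by simp
  have h2: "hat_compact TYPE(complex) f" using hat_compact_par fp by simp
  have f0: "f 0 = 0" using f_def(1)[of 0] by simp
  show ?thesis using l fx fy r h1 h2 f0 by blast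
qed

end
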